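(* Let $\lambda$ be a nonzero real number, $r$ a nonnegative integer, and $p(x)\in\mathbb{C}[x]$ of degree $n$. Then: (a) If $r>n$, \begin{align*} p(x)&=\sum_{k=0}^{n}\frac{1}{k!}\sum_{j=0}^{k}(-1)^{k-j}\binom{k}{j}\Big(I^{r-k}p\big(\lambda\mathbf{B}^{(r-k)}(\tfrac{x}{\lambda})\big)\Big)\Big|_{x=j}\,\beta^{(r)}_{k,\lambda}(x)\\ &=\sum_{k=0}^{n}\frac{1}{k!}\sum_{j=0}^{k}\sum_{l=0}^{n}(-1)^{k-j}\binom{k}{j}\frac{(r-k)!}{(l+r-k)!}S_2(l+r-k,r-k)\,p^{(l)}\big(\lambda\mathbf{B}^{(r-k)}(\tfrac{x}{\lambda})\big)\Big|_{x=j}\,\beta^{(r)}_{k,\lambda}(x). \end{align*} (b) If $r\le n$, \begin{align*} p(x)&=\sum_{k=0}^{r-1}\frac{1}{k!}\sum_{j=0}^{k}(-1)^{k-j}\binom{k}{j}\Big(I^{r-k}p\big(\lambda\mathbf{B}^{(r-k)}(\tfrac{x}{\lambda})\big)\Big)\Big|_{x=j}\,\beta^{(r)}_{k,\lambda}(x)\\ &\quad+\sum_{k=r}^{n}\frac{1}{k!\,\lambda^{k-r}}\sum_{j=0}^{r}\sum_{l=0}^{k-r}(-1)^{k-j-l}\binom{r}{j}\binom{k-r}{l}p(j+l\lambda)\,\beta^{(r)}_{k,\lambda}(x)\\ &=\sum_{k=0}^{r-1}\frac{1}{k!}\sum_{j=0}^{k}\sum_{l=0}^{n}(-1)^{k-j}\binom{k}{j}\frac{(r-k)!}{(l+r-k)!}S_2(l+r-k,r-k)\,p^{(l)}\big(\lambda\mathbf{B}^{(r-k)}(\tfrac{x}{\lambda})\big)\Big|_{x=j}\,\beta^{(r)}_{k,\lambda}(x)\\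 &\quad+\sum_{k=r}^{n}\frac{1}{k!}\sum_{j=0}^{r}\sum_{l=k-r}^{n}(-1)^{r-j}\binom{r}{j}(k-r)!\,\frac{\lambda^{l-k+r}}{l!}S_2(l,k-r)\,p^{(l)}(j)\,\beta^{(r)}_{k,\lambda}(x). \end{align*}
   Context: Higher-order degenerate Bernoulli polynomials $\beta^{(r)}_{n,\lambda}(x)$ are defined by $\Big(\frac{t}{(1+\lambda t)^{1/\lambda}-1}\Big)^r(1+\lambda t)^{x/\lambda}=\sum_{n\ge0}\beta^{(r)}_{n,\lambda}(x)\frac{t^n}{n!}$. Higher-order Bernoulli polynomials $B^{(a)}_n(x)$ are defined by $\big(\frac{t}{e^t-1}\big)^ae^{xt}=\sum_{n\ge0}B^{(a)}_n(x)\frac{t^n}{n!}$. For a polynomial $q(x)=\sum_i b_ix^i$, the umbral composition $q\big(\lambda\mathbf{B}^{(a)}(\frac{x}{\lambda})\big)$ denotes the polynomial $\sum_i b_i\lambda^iB^{(a)}_i(\frac{x}{\lambda})$ in $x$; in particular $p^{(l)}\big(\lambda\mathbf{B}^{(a)}(\frac{x}{\lambda})\big)$ is this composition applied to the $l$-th derivative $p^{(l)}$ of $p$. $I$ is the linear operator on polynomials $Iq(x)=\int_x^{x+1}q(u)\,du$, and $I^m$ its $m$-th iterate. $S_2(l,m)$ are Stirling numbers of the second kind, $\frac{1}{m!}(e^t-1)^m=\sum_{l\ge m}S_2(l,m)\frac{t^l}{l!}$. *)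

theory Defs
  imports "HOL-Analysis.Analysis" "HOL-Computational_Algebra.Computational_Algebra"
          "HOL-Combinatorics.Stirling"
begin

text \<open>The formal power series (1 + lam t)^(a/lam), i.e. sum over n of
  ((a/lam) gchoose n) * lam^n * t^n  (the binomial series).\<close>
definition deg_exp :: "complex \<Rightarrow> complex \<Rightarrow> complex fps" where
  "deg_exp lam a = Abs_fps (\<lambda>n. ((a / lam) gchoose n) * lam ^ n)"

definition degen_bernpoly :: "nat \<Rightarrow> complex \<Rightarrow> nat \<Rightarrow> complex \<Rightarrow> complex" where
  "degen_bernpoly r lam k x =
     fact k * fps_nth ((fps_X / (deg_exp lam 1 - 1)) ^ r * deg_exp lam x) k"

definition bernpoly_ho :: "nat \<Rightarrow> nat \<Rightarrow> complex \<Rightarrow> complex" where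
  "bernpoly_ho a n x = fact n * fps_nth ((fps_X / (fps_exp 1 - 1)) ^ a * fps_exp x) n"

text \<open>Umbral composition q(lam B^(a)(x/lam)) = sum_i b_i lam^i B^(a)_i(x/lam).\<close>
definition umbral :: "complex \<Rightarrow> nat \<Rightarrow> complex poly \<Rightarrow> complex \<Rightarrow> complex" where
  "umbral lam a q x = (\<Sum>i\<le>degree q. coeff q i * lam ^ i * bernpoly_ho a i (x / lam))"

definition Iop :: "(real \<Rightarrow> complex) \<Rightarrow> real \<Rightarrow> complex" where
  "Iop f = (\<lambda>x. integral {x..x+1} f)"

end

theory Submission
  imports Defs
begin

no_notation vec_nth (infixl "$" 90)


definition Dop :: "complex fps \<Rightarrow> complex poly \<Rightarrow> complex poly" where
  "Dop h q = (\<Sum>i\<le>degree q. smult (h$i) ((pderiv^^i) q))"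

lemma coeff_pderiv_iter:
  "coeff ((pderiv^^i) q) j = pochhammer (of_nat (Suc j)) i * coeff q (j+i)"
proof (induction i arbitrary: j)
  case 0 then show ?case by simp
next
  case (Suc i)
  have "coeff ((pderiv^^Suc i) q) j = of_nat (Suc j) * coeff ((pderiv^^i) q) (Suc j)"
    by (simp add: coeff_pderiv)
  also have "\<dots> = of_nat (Suc j) * (pochhammer (of_nat (Suc (Suc j))) i * coeff q (Suc j + i))"
    using Suc by simp
  also have "\<dots> = pochhammer (of_nat (Suc j)) (Suc i) * coeff q (j + Suc i)"
    by (simp add: pochhammer_rec add_ac mult_ac)
  finally show ?case .
qed

lemma coeff_Dop:
  assumes "degree q \<le> N"
  shows "coeff (Dop h q) j = (\<Sum>i\<le>N. h$i * pochhammer (of_nat (Suc j)) i * coeff q (j+i))"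
proof -
  have "coeff (Dop h q) j = (\<Sum>i\<le>degree q. h$i * pochhammer (of_nat (Suc j)) i * coeff q (j+i))"
    by (simp add: Dop_def coeff_sum coeff_pderiv_iter mult_ac)
  also have "\<dots> = (\<Sum>i\<le>N. h$i * pochhammer (of_nat (Suc j)) i * coeff q (j+i))"
    by (rule sum.mono_neutral_left) (use assms in \<open>auto simp: coeff_eq_0\<close>)
  finally show ?thesis .
qed

lemma degree_Dop: "degree (Dop h q) \<le> degree q"
proof (rule degree_le, intro allI impI)
  fix j assume "degree q < j"
  then show "coeff (Dop h q) j = 0"
    by (subst coeff_Dop[OF order_refl]) (auto intro!: sum.neutral simp: coeff_eq_0)
qed

lemma Dop_mult: "Dop h1 (Dop h2 q) = Dop (h1 * h2) q"
proof (rule poly_eqI)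
  fix j
  define N where "N = degree q"
  define c where "c = (\<lambda>i. coeff q i)"
  define f where "f = (\<lambda>a b. h1$a * h2$b * pochhammer (of_nat (Suc j)) (a+b) * c (j+a+b))"
  have dq: "degree q \<le> N" by (simp add: N_def)
  have d2: "degree (Dop h2 q) \<le> N" using degree_Dop[of h2 q] by (simp add: N_def)
  have "coeff (Dop h1 (Dop h2 q)) j =
     (\<Sum>a\<le>N. h1$a * pochhammer (of_nat (Suc j)) a *
        (\<Sum>b\<le>N. h2$b * pochhammer (of_nat (Suc (j+a))) b * c (j+a+b)))"
    by (simp add: coeff_Dop[OF d2] coeff_Dop[OF dq] c_def add_ac)
  also have "\<dots> = (\<Sum>a\<le>N. \<Sum>b\<le>N. f a b)"
    by (auto simp: f_def sum_distrib_left pochhammer_product' add_ac mult_ac intro!: sum.cong)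
  also have "\<dots> = (\<Sum>(a,b)\<in>{..N}\<times>{..N}. f a b)"
    by (simp add: sum.cartesian_product)
  also have "\<dots> = (\<Sum>(a,b)\<in>{(a,b). a+b \<le> N}. f a b)"
    by (rule sum.mono_neutral_right)
       (auto simp: f_def c_def N_def dest!: le_degree)
  also have "\<dots> = (\<Sum>n\<le>N. \<Sum>a\<le>n. f a (n-a))"
    by (rule sum.triangle_reindex_eq)
  also have "\<dots> = (\<Sum>n\<le>N. (h1*h2)$n * pochhammer (of_nat (Suc j)) n * c (j+n))"
    by (auto simp: f_def fps_mult_nth sum_distrib_right atLeast0AtMost intro!: sum.cong)
  also have "\<dots> = coeff (Dop (h1*h2) q) j"
    by (simp add: coeff_Dop[OF dq] c_def)
  finally show "coeff (Dop h1 (Dop h2 q)) j = coeff (Dop (h1 * h2) q) j" .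
qed

lemma Dop_one: "Dop 1 q = q"
proof -
  have "Dop 1 q = (\<Sum>i\<le>degree q. if i = 0 then q else 0)"
    unfolding Dop_def by (intro sum.cong) auto
  then show ?thesis by simp
qed

lemma Dop_X: "Dop fps_X q = pderiv q"
proof -
  have "Dop fps_X q = (\<Sum>i\<le>degree q. if i = 1 then pderiv q else 0)"
    unfolding Dop_def by (intro sum.cong) (auto simp: fps_X_nth)
  then show ?thesis using pderiv_eq_0_iff[of q] by (auto simp: sum.delta)
qed

lemma Dop_add_left: "Dop (h1 + h2) q = Dop h1 q + Dop h2 q"
  by (simp add: Dop_def sum.distrib smult_add_left)

lemma Dop_diff_left: "Dop (h1 - h2) q = Dop h1 q - Dop h2 q"
  by (simp add: Dop_def sum_subtractf smult_diff_left)

lemma Dop_const_left: "Dop (fps_const c * h) q = smult c (Dop h q)"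
  by (rule poly_eqI) (simp add: coeff_Dop[OF order_refl] sum_distrib_left mult_ac)

lemma Dop_sum_left: "Dop (\<Sum>x\<in>A. h x) q = (\<Sum>x\<in>A. Dop (h x) q)"
  by (induction A rule: infinite_finite_induct) (simp_all add: Dop_add_left Dop_def[of 0])

lemma Dop_add_right: "Dop h (q1 + q2) = Dop h q1 + Dop h q2"
proof (rule poly_eqI)
  fix j
  define N where "N = max (degree q1) (degree q2)"
  have d: "degree q1 \<le> N" "degree q2 \<le> N" "degree (q1+q2) \<le> N"
    using degree_add_le_max[of q1 q2] by (auto simp: N_def)
  show "coeff (Dop h (q1 + q2)) j = coeff (Dop h q1 + Dop h q2) j"
    by (simp add: coeff_Dop[OF d(1)] coeff_Dop[OF d(2)] coeff_Dop[OF d(3)] sum.distrib algebra_simps)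
qed

lemma Dop_smult_right: "Dop h (smult c q) = smult c (Dop h q)"
  by (rule poly_eqI) (simp add: coeff_Dop[OF order_refl] sum_distrib_left mult_ac)

lemma Dop_sum_right: "Dop h (\<Sum>x\<in>A. g x) = (\<Sum>x\<in>A. Dop h (g x))"
  by (induction A rule: infinite_finite_induct) (simp_all add: Dop_add_right Dop_def[of _ 0])

definition evl :: "complex fps \<Rightarrow> complex poly \<Rightarrow> complex" where
  "evl h q = poly (Dop h q) 0"

lemma evl_altdef:
  assumes "degree q \<le> N"
  shows "evl h q = (\<Sum>i\<le>N. fps_nth h i * fact i * coeff q i)"
  by (simp add: evl_def poly_0_coeff_0 coeff_Dop[OF assms] pochhammer_fact)

lemma evl_exp: "evl (fps_exp b) q = poly q b"
  by (simp add: evl_altdef[OF order_refl] poly_altdef fps_exp_def mult_ac)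

lemma poly_Dop_evl: "poly (Dop H q) y = evl (fps_exp y * H) q"
proof -
  have "poly (Dop H q) y = evl (fps_exp y) (Dop H q)" by (simp add: evl_exp)
  also have "\<dots> = evl (fps_exp y * H) q" by (simp add: evl_def Dop_mult)
  finally show ?thesis .
qed

lemma Dop_exp: "poly (Dop (fps_exp a) q) y = poly q (y + a)"
  by (simp add: poly_Dop_evl fps_exp_add_mult[symmetric] evl_exp)

section \<open>Stirling egf\<close>

lemma expm1_power_nth:
  fixes c :: complex
  shows
  "((fps_exp c - 1) ^ m) $ l = c ^ l * fact m * of_nat (Stirling l m) / fact l"
proof (induction l arbitrary: m)
  case 0
  have "((fps_exp c - 1) ^ m) $ 0 = (0::complex) ^ m" by (simp add: fps_nth_power_0)
  then show ?case by (cases m) auto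
next
  case (Suc l)
  show ?case
  proof (cases m)
    case 0 then show ?thesis by simp
  next
    case (Suc m')
    define P where "P = (\<lambda>k. (fps_exp c - 1) ^ k)"
    have d: "fps_deriv (fps_exp c - 1) = fps_const c * fps_exp c" by simp
    have "fps_deriv (P (Suc m')) = fps_const (of_nat (Suc m')) * (fps_const c * fps_exp c) * P m'"
      by (simp only: P_def fps_deriv_power d diff_Suc_1)
    also have "fps_exp c = (fps_exp c - 1) + 1" by simp
    also have "fps_const (of_nat (Suc m')) * (fps_const c * ((fps_exp c - 1) + 1)) * P m'
       = fps_const (of_nat (Suc m') * c) * (P (Suc m') + P m')"
      by (simp add: P_def algebra_simps)
    finally have "fps_deriv (P (Suc m')) $ l = (of_nat (Suc m') * c) * (P (Suc m') $ l + P m' $ l)"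
      by simp
    then have eq: "of_nat (Suc l) * P (Suc m') $ Suc l = (of_nat (Suc m') * c) * (P (Suc m') $ l + P m' $ l)"
      by simp
    have "P (Suc m') $ Suc l = (of_nat (Suc m') * c) * (P (Suc m') $ l + P m' $ l) / of_nat (Suc l)"
      using eq by (simp add: field_simps del: of_nat_Suc)
    also have "\<dots> = c ^ Suc l * fact (Suc m') * of_nat (Stirling (Suc l) (Suc m')) / fact (Suc l)"
    proof -
      define S1 where "S1 = (of_nat (Stirling l (Suc m')) :: complex)"
      define S0 where "S0 = (of_nat (Stirling l m') :: complex)"
      have St: "(of_nat (Stirling (Suc l) (Suc m')) :: complex) = of_nat (Suc m') * S1 + S0"
        by (simp add: S1_def S0_def algebra_simps)
      have fl: "(fact l :: complex) \<noteq> 0" by simp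
      have h1: "P (Suc m') $ l + P m' $ l = c^l * fact m' * (of_nat (Suc m') * S1 + S0) / fact l"
        using Suc.IH[of "Suc m'"] Suc.IH[of m'] unfolding P_def S1_def S0_def
        by (simp add: fact_Suc add_divide_distrib algebra_simps)
      show ?thesis unfolding h1 St
        by (simp add: fact_Suc del: of_nat_Suc) (simp add: field_simps)
    qed
    finally show ?thesis using Suc by (simp add: P_def)
  qed
qed

section \<open>Scaling\<close>

definition fscale :: "complex \<Rightarrow> complex fps \<Rightarrow> complex fps" where
  "fscale c f = Abs_fps (\<lambda>n. c ^ n * fps_nth f n)"

lemma fscale_nth [simp]: "fps_nth (fscale c f) n = c ^ n * fps_nth f n"
  by (simp add: fscale_def)

lemma fscale_mult: "fscale c (f * g) = fscale c f * fscale c g"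
proof (rule fps_ext)
  fix n
  have "fps_nth (fscale c (f * g)) n = (\<Sum>i=0..n. c^n * (fps_nth f i * fps_nth g (n - i)))"
    by (simp add: fps_mult_nth sum_distrib_left)
  also have "\<dots> = (\<Sum>i=0..n. (c^i * fps_nth f i) * (c^(n-i) * fps_nth g (n - i)))"
  proof (rule sum.cong)
    fix i assume "i \<in> {0..n}"
    then have "c^n = c^i * c^(n-i)" by (simp flip: power_add)
    then show "c^n * (fps_nth f i * fps_nth g (n - i)) = (c^i * fps_nth f i) * (c^(n-i) * fps_nth g (n - i))"
      by simp
  qed simp
  also have "\<dots> = fps_nth (fscale c f * fscale c g) n"
    by (simp add: fps_mult_nth)
  finally show "fps_nth (fscale c (f * g)) n = fps_nth (fscale c f * fscale c g) n" .
qed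

lemma fscale_power: "fscale c (f ^ k) = fscale c f ^ k"
  by (induction k) (auto simp: fscale_mult fps_ext fps_one_nth)

lemma fscale_diff: "fscale c (f - g) = fscale c f - fscale c g"
  by (rule fps_ext) (simp add: algebra_simps)

lemma fscale_one: "fscale c 1 = 1"
  by (rule fps_ext) (simp add: fps_one_nth)

lemma fscale_X: "fscale c fps_X = fps_const c * fps_X"
  by (rule fps_ext) (auto simp: fps_X_nth le_Suc_eq)

lemma fscale_exp: "fscale c (fps_exp a) = fps_exp (c * a)"
  by (rule fps_ext) (simp add: fps_exp_def power_mult_distrib)

section \<open>Composition coefficient\<close>

lemma mult_power_prefix:
  fixes G F :: "complex fps"
  assumes "fps_nth F 0 = 0" "m < k"
  shows "fps_nth (G * F ^ k) m = 0"
  using startsby_zero_power_prefix[OF assms(1), of k] assms(2)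
  by (auto simp: fps_mult_nth intro!: sum.neutral)

lemma mult_compose_nth:
  fixes G A F :: "complex fps"
  assumes F0: "fps_nth F 0 = 0"
  shows "fps_nth (G * (A oo F)) m = (\<Sum>k\<le>m. fps_nth A k * fps_nth (G * F ^ k) m)"
proof -
  have "fps_nth (G * (A oo F)) m = (\<Sum>i=0..m. fps_nth G i * (\<Sum>k=0..m-i. fps_nth A k * fps_nth (F^k) (m-i)))"
    by (simp add: fps_mult_nth fps_compose_nth)
  also have "\<dots> = (\<Sum>i=0..m. fps_nth G i * (\<Sum>k=0..m. fps_nth A k * fps_nth (F^k) (m-i)))"
  proof (rule sum.cong[OF refl])
    fix i assume "i \<in> {0..m}"
    have "(\<Sum>k=0..m-i. fps_nth A k * fps_nth (F^k) (m-i)) = (\<Sum>k=0..m. fps_nth A k * fps_nth (F^k) (m-i))"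
      by (rule sum.mono_neutral_left) (use startsby_zero_power_prefix[OF F0] in auto)
    then show "fps_nth G i * (\<Sum>k=0..m-i. fps_nth A k * fps_nth (F^k) (m-i)) = fps_nth G i * (\<Sum>k=0..m. fps_nth A k * fps_nth (F^k) (m-i))"
      by simp
  qed
  also have "\<dots> = (\<Sum>k=0..m. fps_nth A k * (\<Sum>i=0..m. fps_nth G i * fps_nth (F^k) (m-i)))"
    unfolding sum_distrib_left by (subst sum.swap) (intro sum.cong refl, simp add: mult.left_commute)
  also have "\<dots> = (\<Sum>k\<le>m. fps_nth A k * fps_nth (G * F ^ k) m)"
    by (simp add: fps_mult_nth atLeast0AtMost)
  finally show ?thesis .
qed

definition Fd :: "complex \<Rightarrow> complex fps" where
  "Fd L = fps_const (1/L) * (fps_exp L - 1)"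
definition E1 :: "complex fps" where
  "E1 = Abs_fps (\<lambda>n. 1 / fact (Suc n))"
definition Bo :: "complex fps" where
  "Bo = fps_X / (fps_exp 1 - 1)"
definition Bl :: "complex \<Rightarrow> complex fps" where
  "Bl L = fscale L Bo"
definition Qd :: "complex \<Rightarrow> complex fps" where
  "Qd L = E1 * Bl L"
definition Bd :: "complex \<Rightarrow> complex fps" where
  "Bd L = fps_X / (deg_exp L 1 - 1)"
definition Ad :: "nat \<Rightarrow> complex \<Rightarrow> complex \<Rightarrow> complex fps" where
  "Ad r L x = Bd L ^ r * deg_exp L x"

lemma Fd_0: "fps_nth (Fd L) 0 = 0"
  by (simp add: Fd_def)

lemma Fd_1: "L \<noteq> 0 \<Longrightarrow> fps_nth (Fd L) 1 = 1"
  by (simp add: Fd_def fps_exp_def)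

lemma Fd_nz: "L \<noteq> 0 \<Longrightarrow> Fd L \<noteq> 0"
  using Fd_1[of L] by auto

lemma deg_exp_nth: "fps_nth (deg_exp L a) n = ((a / L) gchoose n) * L ^ n"
  by (simp add: deg_exp_def)

lemma times_divide_X:
  fixes g :: "complex fps"
  assumes "fps_nth g 1 \<noteq> 0"
  shows "fps_X / g * g = fps_X"
proof -
  have g: "g \<noteq> 0" using assms by auto
  have "subdegree g \<le> 1" using assms by (intro subdegree_leI) auto
  then show ?thesis by (intro fps_times_divide_eq g) simp
qed

lemma Bo_eq: "Bo * (fps_exp 1 - 1) = fps_X"
  unfolding Bo_def by (rule times_divide_X) (simp add: fps_exp_def)

lemma Bl_Fd: assumes "L \<noteq> 0" shows "Bl L * Fd L = fps_X"
proof -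
  have "fscale L (Bo * (fps_exp 1 - 1)) = fps_const L * fps_X"
    by (simp add: Bo_eq fscale_X)
  then have "Bl L * (fps_exp L - 1) = fps_const L * fps_X"
    by (simp add: fscale_mult fscale_diff fscale_one fscale_exp Bl_def)
  then have "fps_const (1/L) * (Bl L * (fps_exp L - 1)) = fps_const (1/L) * (fps_const L * fps_X)"
    by simp
  also have "\<dots> = fps_X" using assms by (simp flip: mult.assoc fps_const_mult)
  finally show ?thesis by (simp add: Fd_def mult_ac)
qed

lemma E1_X: "E1 * fps_X = fps_exp 1 - 1"
  by (rule fps_ext, rename_tac n, case_tac n) (simp_all add: E1_def fps_exp_def)

lemma Qd_Fd: "L \<noteq> 0 \<Longrightarrow> Qd L * Fd L = fps_exp 1 - 1"
  by (simp add: Qd_def mult.assoc Bl_Fd E1_X)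

lemma deg_exp_ODE:
  assumes L: "L \<noteq> 0"
  shows "(1 + fps_const L * fps_X) * fps_deriv (deg_exp L a) = fps_const a * deg_exp L a"
proof (rule fps_ext)
  fix n
  define c where "c = a / L"
  have cL: "c * L = a" using L by (simp add: c_def)
  have absb: "of_nat (Suc k) * (c gchoose Suc k) = (c - of_nat k) * (c gchoose k)" for k
    by (simp only: gbinomial_absorption gbinomial_absorb_comp)
  show "fps_nth ((1 + fps_const L * fps_X) * fps_deriv (deg_exp L a)) n = fps_nth (fps_const a * deg_exp L a) n"
  proof (cases n)
    case 0 then show ?thesis by (simp add: deg_exp_nth distrib_right c_def[symmetric] cL)
  next
    case (Suc m)
    have "fps_nth ((1 + fps_const L * fps_X) * fps_deriv (deg_exp L a)) n =
       of_nat (Suc (Suc m)) * (c gchoose Suc (Suc m)) * L ^ Suc (Suc m) + L * (of_nat (Suc m) * ((c gchoose Suc m) * L ^ Suc m))"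
      using Suc by (simp add: distrib_right deg_exp_nth c_def[symmetric] mult.assoc del: of_nat_Suc)
    also have "\<dots> = L ^ Suc (Suc m) * c * (c gchoose Suc m)"
      by (subst absb) (simp add: algebra_simps)
    also have "\<dots> = fps_nth (fps_const a * deg_exp L a) n"
      using Suc by (simp add: deg_exp_nth c_def[symmetric] cL[symmetric] algebra_simps)
    finally show ?thesis .
  qed
qed

lemma deg_exp_compose:
  assumes L: "L \<noteq> 0"
  shows "deg_exp L a oo Fd L = fps_exp a"
proof -
  define D where "D = deg_exp L a"
  define F where "F = Fd L"
  have F0: "fps_nth F 0 = 0" by (simp add: F_def Fd_0)
  have dF: "fps_deriv F = fps_exp L"
    using L by (simp add: F_def Fd_def flip: mult.assoc fps_const_mult)
  have eL: "fps_exp L = 1 + fps_const L * F"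
    using L by (simp add: F_def Fd_def flip: mult.assoc)
  have "((1 + fps_const L * fps_X) * fps_deriv D) oo F = (fps_const a * D) oo F"
    using deg_exp_ODE[OF L, of a] by (simp add: D_def)
  then have "(1 + fps_const L * F) * (fps_deriv D oo F) = fps_const a * (D oo F)"
    by (simp add: fps_compose_mult_distrib[OF F0] fps_compose_add_distrib F0)
  then have "fps_deriv (D oo F) = fps_const a * (D oo F)"
    by (simp add: fps_compose_deriv[OF F0] dF eL mult_ac)
  then have "D oo F = fps_const (fps_nth (D oo F) 0) * fps_exp a"
    by (simp only: fps_exp_unique_ODE)
  also have "fps_nth (D oo F) 0 = 1" by (simp add: D_def deg_exp_nth)
  finally show ?thesis by (simp add: D_def F_def)
qed

lemma Bd_eq: "L \<noteq> 0 \<Longrightarrow> Bd L * (deg_exp L 1 - 1) = fps_X"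
  unfolding Bd_def by (rule times_divide_X) (simp add: deg_exp_nth)

lemma Bd_Qd: assumes L: "L \<noteq> 0" shows "(Bd L oo Fd L) * Qd L = 1"
proof -
  have F0: "fps_nth (Fd L) 0 = 0" by (simp add: Fd_0)
  have "(Bd L * (deg_exp L 1 - 1)) oo Fd L = fps_X oo Fd L" by (simp add: Bd_eq[OF L])
  then have "(Bd L oo Fd L) * (fps_exp 1 - 1) = Fd L"
    by (simp add: fps_compose_mult_distrib[OF F0] fps_compose_sub_distrib deg_exp_compose[OF L] F0)
  then have "((Bd L oo Fd L) * Qd L) * Fd L = 1 * Fd L"
    by (simp add: mult.assoc Qd_Fd[OF L])
  then show ?thesis using Fd_nz[OF L] by (simp only: mult_cancel_right) simp
qed

lemma Qd_Ad: assumes L: "L \<noteq> 0" shows "Qd L ^ r * (Ad r L x oo Fd L) = fps_exp x"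
proof -
  have F0: "fps_nth (Fd L) 0 = 0" by (simp add: Fd_0)
  have "Ad r L x oo Fd L = (Bd L oo Fd L) ^ r * fps_exp x"
    by (simp add: Ad_def fps_compose_mult_distrib[OF F0] fps_compose_power[OF F0] deg_exp_compose[OF L])
  then have "Qd L ^ r * (Ad r L x oo Fd L) = ((Bd L oo Fd L) * Qd L) ^ r * fps_exp x"
    by (simp add: power_mult_distrib mult_ac)
  then show ?thesis by (simp add: Bd_Qd[OF L])
qed

lemma expansion:
  assumes L: "L \<noteq> 0" and dp: "degree p \<le> n"
  shows "poly p x = (\<Sum>k\<le>n. fps_nth (Ad r L x) k * evl (Qd L ^ r * Fd L ^ k) p)"
proof -
  define G where "G = Qd L ^ r"
  define A where "A = Ad r L x"
  have F0: "fps_nth (Fd L) 0 = 0" by (simp add: Fd_0)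
  have "poly p x = evl (fps_exp x) p" by (simp add: evl_exp)
  also have "\<dots> = (\<Sum>m\<le>n. fps_nth (G * (A oo Fd L)) m * fact m * coeff p m)"
    by (simp add: evl_altdef[OF dp] G_def A_def Qd_Ad[OF L])
  also have "\<dots> = (\<Sum>m\<le>n. \<Sum>k\<le>n. fps_nth A k * fps_nth (G * Fd L ^ k) m * fact m * coeff p m)"
  proof (rule sum.cong[OF refl])
    fix m assume m: "m \<in> {..n}"
    have "fps_nth (G * (A oo Fd L)) m = (\<Sum>k\<le>m. fps_nth A k * fps_nth (G * Fd L ^ k) m)"
      by (rule mult_compose_nth[OF F0])
    also have "\<dots> = (\<Sum>k\<le>n. fps_nth A k * fps_nth (G * Fd L ^ k) m)"
      by (rule sum.mono_neutral_left) (use m mult_power_prefix[OF F0] in auto)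
    finally show "fps_nth (G * (A oo Fd L)) m * fact m * coeff p m =
       (\<Sum>k\<le>n. fps_nth A k * fps_nth (G * Fd L ^ k) m * fact m * coeff p m)"
      by (simp add: sum_distrib_right)
  qed
  also have "\<dots> = (\<Sum>k\<le>n. fps_nth A k * (\<Sum>m\<le>n. fps_nth (G * Fd L ^ k) m * fact m * coeff p m))"
    by (subst sum.swap) (simp add: sum_distrib_left mult.assoc)
  also have "\<dots> = (\<Sum>k\<le>n. fps_nth (Ad r L x) k * evl (Qd L ^ r * Fd L ^ k) p)"
    by (simp add: evl_altdef[OF dp] G_def A_def)
  finally show ?thesis .
qed

section \<open>Operator identities\<close>

lemma pderiv_iter_zero: "degree q < i \<Longrightarrow> (pderiv^^i) q = 0"
  by (rule poly_eqI) (simp add: coeff_pderiv_iter coeff_eq_0)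

lemma Dop_N:
  assumes "degree q \<le> N"
  shows "Dop h q = (\<Sum>i\<le>N. smult (fps_nth h i) ((pderiv^^i) q))"
  unfolding Dop_def by (rule sum.mono_neutral_left) (use assms in \<open>auto simp: pderiv_iter_zero\<close>)

lemma umbral_Dop:
  assumes L: "L \<noteq> 0"
  shows "umbral L m q y = poly (Dop (Bl L ^ m) q) y"
proof -
  have "poly (Dop (Bl L ^ m) q) y = (\<Sum>i\<le>degree q. fps_nth (fps_exp y * Bl L ^ m) i * fact i * coeff q i)"
    by (simp add: poly_Dop_evl evl_altdef[OF order_refl])
  also have "\<dots> = umbral L m q y"
    unfolding umbral_def bernpoly_ho_def
  proof (rule sum.cong[OF refl])
    fix i
    have "fps_nth (fps_exp y * Bl L ^ m) i = fps_nth (fscale L ((fps_X / (fps_exp 1 - 1)) ^ m * fps_exp (y / L))) i"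
      using L by (simp only: fscale_mult fscale_power fscale_exp Bl_def Bo_def) (simp add: mult_ac)
    also have "\<dots> = L ^ i * fps_nth ((fps_X / (fps_exp 1 - 1)) ^ m * fps_exp (y / L)) i" by simp
    finally show "fps_nth (fps_exp y * Bl L ^ m) i * fact i * coeff q i =
      coeff q i * L ^ i * (fact i * fps_nth ((fps_X / (fps_exp 1 - 1)) ^ m * fps_exp (y / L)) i)"
      by simp
  qed
  finally show ?thesis by simp
qed

definition antider :: "complex poly \<Rightarrow> complex poly" where
  "antider U = (\<Sum>i\<le>degree U. monom (coeff U i / of_nat (Suc i)) (Suc i))"

lemma pderiv_antider: "pderiv (antider U) = U"
proof (rule poly_eqI)
  fix n
  have "coeff (antider U) (Suc n) = (if n \<le> degree U then coeff U n / of_nat (Suc n) else 0)"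
    by (simp add: antider_def coeff_sum coeff_monom)
  then show "coeff (pderiv (antider U)) n = coeff U n"
    by (auto simp: coeff_pderiv coeff_eq_0 simp del: of_nat_Suc)
qed

lemma Iop_poly: "Iop (\<lambda>t. poly U (of_real t)) = (\<lambda>t. poly (Dop E1 U) (of_real t))"
proof
  fix x :: real
  define Q where "Q = antider U"
  have "((\<lambda>t. poly U (of_real t)) has_integral (poly Q (of_real (x+1)) - poly Q (of_real x))) {x..x+1}"
  proof (rule fundamental_theorem_of_calculus[where f="\<lambda>t. poly Q (of_real t)"])
    fix t :: real
    assume "t \<in> {x..x+1}"
    have "(poly Q has_field_derivative poly U (of_real t)) (at (of_real t))"
      using poly_DERIV[of Q "of_real t"] by (simp add: Q_def pderiv_antider)
    then show "((\<lambda>t. poly Q (of_real t)) has_vector_derivative poly U (of_real t)) (at t within {x..x+1})"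
      by (rule has_vector_derivative_real_field)
  qed simp
  then have "Iop (\<lambda>t. poly U (of_real t)) x = poly Q (of_real x + 1) - poly Q (of_real x)"
    by (simp add: Iop_def integral_unique)
  also have "\<dots> = poly (Dop (fps_exp 1) Q) (of_real x) - poly (Dop 1 Q) (of_real x)"
    by (simp add: Dop_exp Dop_one)
  also have "\<dots> = poly (Dop (E1 * fps_X) Q) (of_real x)"
    by (simp add: E1_X Dop_diff_left)
  also have "\<dots> = poly (Dop E1 U) (of_real x)"
    by (simp flip: Dop_mult add: Dop_X Q_def pderiv_antider)
  finally show "Iop (\<lambda>t. poly U (of_real t)) x = poly (Dop E1 U) (of_real x)" .
qed

lemma Iop_iter: "(Iop^^m) (\<lambda>t. poly U (of_real t)) = (\<lambda>t. poly (Dop (E1^m) U) (of_real t))"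
proof (induction m)
  case 0 then show ?case by (simp add: Dop_one)
next
  case (Suc m) then show ?case by (simp add: Iop_poly Dop_mult)
qed

lemma fps_const_sign: "fps_const ((-1::complex)^n * of_nat a) = (-1)^n * of_nat a"
  by (simp only: fps_const_mult[symmetric] fps_const_power[symmetric] fps_const_neg[symmetric]
      fps_const_1_eq_1 fps_of_nat)

lemma expm1_power_binomial:
  fixes c :: complex
  shows "(fps_exp c - 1) ^ m = (\<Sum>l=0..m. fps_const ((-1) ^ (m - l) * of_nat (m choose l)) * fps_exp (of_nat l * c))"
proof -
  have "(fps_exp c - 1) ^ m = (fps_exp c + (- 1)) ^ m" by (simp only: diff_conv_add_uminus)
  also have "\<dots> = (\<Sum>l\<le>m. of_nat (m choose l) * fps_exp c ^ l * (- 1) ^ (m - l))"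
    by (rule binomial_ring)
  also have "\<dots> = (\<Sum>l=0..m. fps_const ((-1) ^ (m - l) * of_nat (m choose l)) * fps_exp (of_nat l * c))"
    unfolding atLeast0AtMost
  proof (rule sum.cong[OF refl])
    fix l
    show "of_nat (m choose l) * fps_exp c ^ l * (- 1) ^ (m - l) =
      fps_const ((-1) ^ (m - l) * of_nat (m choose l)) * fps_exp (of_nat l * c)"
      by (simp only: fps_const_sign fps_exp_power_mult) (simp add: mult_ac)
  qed
  finally show ?thesis .
qed

lemma Dop_expm1:
  "poly (Dop ((fps_exp c - 1) ^ m) q) y = (\<Sum>l=0..m. (-1) ^ (m - l) * of_nat (m choose l) * poly q (y + of_nat l * c))"
  by (simp add: expm1_power_binomial Dop_sum_left Dop_const_left poly_sum Dop_exp)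

lemma evl_expm1:
  "evl ((fps_exp 1 - 1) ^ k * H) q = (\<Sum>j=0..k. (-1) ^ (k - j) * of_nat (k choose j) * poly (Dop H q) (of_nat j))"
  by (simp add: evl_def Dop_mult[symmetric] Dop_expm1)

lemma E1_power_nth:
  "fps_nth (E1 ^ m) l = fact m * of_nat (Stirling (l + m) m) / fact (l + m)"
proof -
  have "(fps_exp 1 - 1) ^ m = fps_X ^ m * E1 ^ m"
    by (simp add: E1_X[symmetric] power_mult_distrib mult_ac)
  then have "fps_nth ((fps_exp 1 - 1) ^ m) (l + m) = fps_nth (E1 ^ m) l"
    by (simp add: fps_X_power_mult_nth)
  then show ?thesis by (simp add: expm1_power_nth)
qed

lemma Fd_power_nth:
  assumes L: "L \<noteq> 0"
  shows "fps_nth (Fd L ^ m) l = (1/L) ^ m * (L ^ l * fact m * of_nat (Stirling l m) / fact l)"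
  by (simp add: Fd_def power_mult_distrib expm1_power_nth)

lemma Hk_less:
  assumes L: "L \<noteq> 0" and "k \<le> r"
  shows "Qd L ^ r * Fd L ^ k = (fps_exp 1 - 1) ^ k * (E1 ^ (r - k) * Bl L ^ (r - k))"
proof -
  have "Qd L ^ r = Qd L ^ (r - k) * Qd L ^ k" using assms by (simp flip: power_add)
  then have "Qd L ^ r * Fd L ^ k = Qd L ^ (r - k) * (Qd L * Fd L) ^ k"
    by (simp add: power_mult_distrib mult_ac)
  also have "\<dots> = (E1 * Bl L) ^ (r - k) * (fps_exp 1 - 1) ^ k"
    unfolding Qd_Fd[OF L] by (simp only: Qd_def)
  also have "\<dots> = (fps_exp 1 - 1) ^ k * (E1 ^ (r - k) * Bl L ^ (r - k))"
    by (simp add: power_mult_distrib mult_ac)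
  finally show ?thesis .
qed

lemma Hk_ge:
  assumes L: "L \<noteq> 0" and "r \<le> k"
  shows "Qd L ^ r * Fd L ^ k = (fps_exp 1 - 1) ^ r * Fd L ^ (k - r)"
proof -
  have "Fd L ^ k = Fd L ^ r * Fd L ^ (k - r)" using assms by (simp flip: power_add)
  then have "Qd L ^ r * Fd L ^ k = (Qd L * Fd L) ^ r * Fd L ^ (k - r)"
    by (simp add: power_mult_distrib mult_ac)
  then show ?thesis using L by (simp add: Qd_Fd)
qed

lemma formA0:
  assumes L: "L \<noteq> 0" and kr: "k \<le> r"
  shows "evl (Qd L ^ r * Fd L ^ k) p =
    (\<Sum>j=0..k. (-1) ^ (k - j) * of_nat (k choose j) * poly (Dop (E1 ^ (r - k) * Bl L ^ (r - k)) p) (of_nat j))"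
  by (simp add: Hk_less[OF L kr] evl_expm1)

lemma formA1:
  assumes L: "L \<noteq> 0" and kr: "k \<le> r"
  shows "evl (Qd L ^ r * Fd L ^ k) p =
    (\<Sum>j=0..k. (-1) ^ (k - j) * of_nat (k choose j) *
       (Iop ^^ (r - k)) (\<lambda>t. umbral L (r - k) p (of_real t)) (real j))"
proof -
  have "(\<lambda>t. umbral L (r - k) p (of_real t)) = (\<lambda>t. poly (Dop (Bl L ^ (r - k)) p) (of_real t))"
    by (simp add: umbral_Dop[OF L])
  then have "(Iop ^^ (r - k)) (\<lambda>t. umbral L (r - k) p (of_real t)) (real j) =
     poly (Dop (E1 ^ (r - k) * Bl L ^ (r - k)) p) (of_nat j)" for j
    by (simp add: Iop_iter Dop_mult)
  then show ?thesis by (simp add: formA0[OF L kr])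
qed

lemma formA2:
  assumes L: "L \<noteq> 0" and kr: "k \<le> r" and dp: "degree p \<le> n"
  shows "evl (Qd L ^ r * Fd L ^ k) p =
    (\<Sum>j=0..k. \<Sum>l=0..n. (-1) ^ (k - j) * of_nat (k choose j) *
              (fact (r - k) / fact (l + r - k)) * of_nat (Stirling (l + r - k) (r - k)) *
              umbral L (r - k) ((pderiv ^^ l) p) (of_nat j))"
proof -
  define m where "m = r - k"
  have lrk: "l + r - k = l + m" for l using kr by (simp add: m_def)
  have inner: "poly (Dop (E1 ^ m * Bl L ^ m) p) y =
      (\<Sum>l=0..n. fact m / fact (l + m) * of_nat (Stirling (l + m) m) * umbral L m ((pderiv ^^ l) p) y)" for y
  proof -
    have "Dop (E1 ^ m * Bl L ^ m) p = Dop (Bl L ^ m) (Dop (E1 ^ m) p)"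
      by (simp add: Dop_mult mult.commute)
    also have "\<dots> = (\<Sum>l\<le>n. smult (fps_nth (E1 ^ m) l) (Dop (Bl L ^ m) ((pderiv ^^ l) p)))"
      by (simp add: Dop_N[OF dp] Dop_sum_right Dop_smult_right)
    finally show ?thesis
      by (simp add: poly_sum umbral_Dop[OF L] E1_power_nth atLeast0AtMost mult_ac)
  qed
  show ?thesis
    unfolding formA0[OF L kr] lrk m_def[symmetric] inner
    by (simp add: sum_distrib_left mult_ac)
qed

lemma formB1:
  assumes L: "L \<noteq> 0" and rk: "r \<le> k"
  shows "evl (Qd L ^ r * Fd L ^ k) p = 1 / L ^ (k - r) *
    (\<Sum>j=0..r. \<Sum>l=0..k - r. (-1) ^ (k - j - l) * of_nat (r choose j) *
        of_nat ((k - r) choose l) * poly p (of_nat j + of_nat l * L))"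
proof -
  have Fp: "Fd L ^ (k - r) = fps_const ((1/L) ^ (k - r)) * (fps_exp L - 1) ^ (k - r)"
    by (simp add: Fd_def power_mult_distrib)
  have sg: "(-1::complex) ^ (r - j) * (-1) ^ (k - r - l) = (-1) ^ (k - j - l)" if "j \<le> r" "l \<le> k - r" for j l
  proof -
    have "r - j + (k - r - l) = k - j - l" using that rk by simp
    then show ?thesis by (metis power_add)
  qed
  have "evl (Qd L ^ r * Fd L ^ k) p =
     (\<Sum>j=0..r. (-1) ^ (r - j) * of_nat (r choose j) * ((1/L) ^ (k - r) *
        (\<Sum>l=0..k - r. (-1) ^ (k - r - l) * of_nat ((k - r) choose l) * poly p (of_nat j + of_nat l * L))))"
    by (simp add: Hk_ge[OF L rk] evl_expm1 Fp Dop_const_left Dop_expm1)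
  also have "\<dots> = (\<Sum>j=0..r. \<Sum>l=0..k - r. (1/L) ^ (k - r) * ((-1) ^ (k - j - l) * of_nat (r choose j) *
        of_nat ((k - r) choose l) * poly p (of_nat j + of_nat l * L)))"
    unfolding sum_distrib_left
  proof (intro sum.cong refl)
    fix j l assume j: "j \<in> {0..r}" and l: "l \<in> {0..k - r}"
    then have e: "(-1::complex)^(k-j-l) = (-1)^(r-j) * (-1)^(k-r-l)" using sg by simp
    show "(- 1) ^ (r - j) * of_nat (r choose j) * ((1 / L) ^ (k - r) * ((- 1) ^ (k - r - l) *
          of_nat (k - r choose l) * poly p (of_nat j + of_nat l * L))) =
         (1 / L) ^ (k - r) * ((- 1) ^ (k - j - l) * of_nat (r choose j) * of_nat (k - r choose l) *
          poly p (of_nat j + of_nat l * L))"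
      unfolding e by (simp only: mult_ac)
  qed
  also have "\<dots> = 1 / L ^ (k - r) *
    (\<Sum>j=0..r. \<Sum>l=0..k - r. (-1) ^ (k - j - l) * of_nat (r choose j) *
        of_nat ((k - r) choose l) * poly p (of_nat j + of_nat l * L))"
    by (simp add: sum_distrib_left power_one_over)
  finally show ?thesis .
qed

lemma formB2:
  assumes L: "L \<noteq> 0" and rk: "r \<le> k" and kn: "k \<le> n" and dp: "degree p \<le> n"
  shows "evl (Qd L ^ r * Fd L ^ k) p =
    (\<Sum>j=0..r. \<Sum>l=k - r..n. (-1) ^ (r - j) * of_nat (r choose j) *
              fact (k - r) * (L ^ (l - (k - r)) / fact l) * of_nat (Stirling l (k - r)) *
              poly ((pderiv ^^ l) p) (of_nat j))"
proof -
  define m where "m = k - r"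
  have inner: "poly (Dop (Fd L ^ m) p) y =
     (\<Sum>l=m..n. fact m * (L ^ (l - m) / fact l) * of_nat (Stirling l m) * poly ((pderiv ^^ l) p) y)" for y
  proof -
    have "poly (Dop (Fd L ^ m) p) y = (\<Sum>l\<le>n. fps_nth (Fd L ^ m) l * poly ((pderiv ^^ l) p) y)"
      by (simp add: Dop_N[OF dp] poly_sum)
    also have "\<dots> = (\<Sum>l=m..n. fps_nth (Fd L ^ m) l * poly ((pderiv ^^ l) p) y)"
      by (rule sum.mono_neutral_right) (auto simp: Fd_power_nth[OF L])
    also have "\<dots> = (\<Sum>l=m..n. fact m * (L ^ (l - m) / fact l) * of_nat (Stirling l m) * poly ((pderiv ^^ l) p) y)"
    proof (rule sum.cong[OF refl])
      fix l assume "l \<in> {m..n}"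
      then have "L ^ l = L ^ m * L ^ (l - m)" by (simp flip: power_add)
      then show "fps_nth (Fd L ^ m) l * poly ((pderiv ^^ l) p) y =
        fact m * (L ^ (l - m) / fact l) * of_nat (Stirling l m) * poly ((pderiv ^^ l) p) y"
        using L by (simp add: Fd_power_nth[OF L] power_one_over field_simps)
    qed
    finally show ?thesis .
  qed
  show ?thesis
    unfolding Hk_ge[OF L rk] evl_expm1 m_def[symmetric] inner
    by (simp add: sum_distrib_left mult_ac)
qed

theorem theorem4p2:
  fixes lam :: real and r n :: nat and p :: "complex poly"
  assumes "lam \<noteq> 0" and "degree p = n"
  defines "L \<equiv> complex_of_real lam"
  shows
  "(n < r \<longrightarrow>
     (\<forall>x. poly p x =
        (\<Sum>k=0..n. 1 / fact k *
           (\<Sum>j=0..k. (-1) ^ (k - j) * of_nat (k choose j) *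
              (Iop ^^ (r - k)) (\<lambda>t. umbral L (r - k) p (of_real t)) (real j))
           * degen_bernpoly r L k x)) \<and>
     (\<forall>x. poly p x =
        (\<Sum>k=0..n. 1 / fact k *
           (\<Sum>j=0..k. \<Sum>l=0..n. (-1) ^ (k - j) * of_nat (k choose j) *
              (fact (r - k) / fact (l + r - k)) * of_nat (Stirling (l + r - k) (r - k)) *
              umbral L (r - k) ((pderiv ^^ l) p) (of_nat j))
           * degen_bernpoly r L k x))) \<and>
   (r \<le> n \<longrightarrow>
     (\<forall>x. poly p x =
        (\<Sum>k<r. 1 / fact k *
           (\<Sum>j=0..k. (-1) ^ (k - j) * of_nat (k choose j) *
              (Iop ^^ (r - k)) (\<lambda>t. umbral L (r - k) p (of_real t)) (real j))
           * degen_bernpoly r L k x)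
      + (\<Sum>k=r..n. 1 / (fact k * L ^ (k - r)) *
           (\<Sum>j=0..r. \<Sum>l=0..k - r. (-1) ^ (k - j - l) * of_nat (r choose j) *
              of_nat ((k - r) choose l) * poly p (of_nat j + of_nat l * L))
           * degen_bernpoly r L k x)) \<and>
     (\<forall>x. poly p x =
        (\<Sum>k<r. 1 / fact k *
           (\<Sum>j=0..k. \<Sum>l=0..n. (-1) ^ (k - j) * of_nat (k choose j) *
              (fact (r - k) / fact (l + r - k)) * of_nat (Stirling (l + r - k) (r - k)) *
              umbral L (r - k) ((pderiv ^^ l) p) (of_nat j))
           * degen_bernpoly r L k x)
      + (\<Sum>k=r..n. 1 / fact k *
           (\<Sum>j=0..r. \<Sum>l=k - r..n. (-1) ^ (r - j) * of_nat (r choose j) *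
              fact (k - r) * (L ^ (l - (k - r)) / fact l) * of_nat (Stirling l (k - r)) *
              poly ((pderiv ^^ l) p) (of_nat j))
           * degen_bernpoly r L k x)))"
proof -
  have L: "L \<noteq> 0" using assms(1) by (simp add: L_def)
  have dp: "degree p \<le> n" using assms(2) by simp
  have beta: "degen_bernpoly r L k x = fact k * fps_nth (Ad r L x) k" for k x
    by (simp add: degen_bernpoly_def Ad_def Bd_def)
  have ex: "poly p x = (\<Sum>k\<le>n. 1 / fact k * evl (Qd L ^ r * Fd L ^ k) p * degen_bernpoly r L k x)" for x
  proof -
    have "poly p x = (\<Sum>k\<le>n. fps_nth (Ad r L x) k * evl (Qd L ^ r * Fd L ^ k) p)"
      by (rule expansion[OF L dp])
    also have "\<dots> = (\<Sum>k\<le>n. 1 / fact k * evl (Qd L ^ r * Fd L ^ k) p * degen_bernpoly r L k x)"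
      by (intro sum.cong refl) (simp add: beta)
    finally show ?thesis .
  qed
  have split: "(\<Sum>k\<le>n. f k) = (\<Sum>k<r. f k) + (\<Sum>k=r..n. f k)" if "r \<le> n" for f :: "nat \<Rightarrow> complex"
  proof -
    have "{..n} = {..<r} \<union> {r..n}" using that by auto
    then have "(\<Sum>k\<le>n. f k) = sum f ({..<r} \<union> {r..n})" by simp
    also have "\<dots> = (\<Sum>k<r. f k) + (\<Sum>k=r..n. f k)" by (rule sum.union_disjoint) auto
    finally show ?thesis .
  qed
  show ?thesis
  proof (intro conjI impI allI)
    fix x assume nr: "n < r"
    show "poly p x = (\<Sum>k=0..n. 1 / fact k *
           (\<Sum>j=0..k. (-1) ^ (k - j) * of_nat (k choose j) *
              (Iop ^^ (r - k)) (\<lambda>t. umbral L (r - k) p (of_real t)) (real j))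
           * degen_bernpoly r L k x)"
      unfolding ex atMost_atLeast0 using nr
      by (intro sum.cong refl) (simp add: formA1[OF L])
  next
    fix x assume nr: "n < r"
    show "poly p x = (\<Sum>k=0..n. 1 / fact k *
           (\<Sum>j=0..k. \<Sum>l=0..n. (-1) ^ (k - j) * of_nat (k choose j) *
              (fact (r - k) / fact (l + r - k)) * of_nat (Stirling (l + r - k) (r - k)) *
              umbral L (r - k) ((pderiv ^^ l) p) (of_nat j))
           * degen_bernpoly r L k x)"
      unfolding ex atMost_atLeast0 using nr
      by (intro sum.cong refl) (simp add: formA2[OF L _ dp])
  next
    fix x assume rn: "r \<le> n"
    have A: "1 / fact k * evl (Qd L ^ r * Fd L ^ k) p * degen_bernpoly r L k x =
        1 / fact k * (\<Sum>j=0..k. (-1) ^ (k - j) * of_nat (k choose j) *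
              (Iop ^^ (r - k)) (\<lambda>t. umbral L (r - k) p (of_real t)) (real j))
           * degen_bernpoly r L k x" if "k < r" for k
      using that by (simp add: formA1[OF L])
    have B: "1 / fact k * evl (Qd L ^ r * Fd L ^ k) p * degen_bernpoly r L k x =
        1 / (fact k * L ^ (k - r)) *
           (\<Sum>j=0..r. \<Sum>l=0..k - r. (-1) ^ (k - j - l) * of_nat (r choose j) *
              of_nat ((k - r) choose l) * poly p (of_nat j + of_nat l * L))
           * degen_bernpoly r L k x" if "r \<le> k" "k \<le> n" for k
      using that by (simp add: formB1[OF L])
    show "poly p x =
        (\<Sum>k<r. 1 / fact k *
           (\<Sum>j=0..k. (-1) ^ (k - j) * of_nat (k choose j) *
              (Iop ^^ (r - k)) (\<lambda>t. umbral L (r - k) p (of_real t)) (real j))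
           * degen_bernpoly r L k x)
      + (\<Sum>k=r..n. 1 / (fact k * L ^ (k - r)) *
           (\<Sum>j=0..r. \<Sum>l=0..k - r. (-1) ^ (k - j - l) * of_nat (r choose j) *
              of_nat ((k - r) choose l) * poly p (of_nat j + of_nat l * L))
           * degen_bernpoly r L k x)"
      unfolding ex[of x] split[OF rn]
      apply (rule arg_cong2[where f="(+)"])
       apply (rule sum.cong[OF refl], rule A, simp)
      apply (rule sum.cong[OF refl], rule B, auto)
      done
  next
    fix x assume rn: "r \<le> n"
    have A: "1 / fact k * evl (Qd L ^ r * Fd L ^ k) p * degen_bernpoly r L k x =
        1 / fact k * (\<Sum>j=0..k. \<Sum>l=0..n. (-1) ^ (k - j) * of_nat (k choose j) *
              (fact (r - k) / fact (l + r - k)) * of_nat (Stirling (l + r - k) (r - k)) *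
              umbral L (r - k) ((pderiv ^^ l) p) (of_nat j))
           * degen_bernpoly r L k x" if "k < r" for k
      using that by (simp add: formA2[OF L _ dp])
    have B: "1 / fact k * evl (Qd L ^ r * Fd L ^ k) p * degen_bernpoly r L k x =
        1 / fact k * (\<Sum>j=0..r. \<Sum>l=k - r..n. (-1) ^ (r - j) * of_nat (r choose j) *
              fact (k - r) * (L ^ (l - (k - r)) / fact l) * of_nat (Stirling l (k - r)) *
              poly ((pderiv ^^ l) p) (of_nat j))
           * degen_bernpoly r L k x" if "r \<le> k" "k \<le> n" for k
      using that by (simp add: formB2[OF L _ _ dp])
    show "poly p x =
        (\<Sum>k<r. 1 / fact k *
           (\<Sum>j=0..k. \<Sum>l=0..n. (-1) ^ (k - j) * of_nat (k choose j) *
              (fact (r - k) / fact (l + r - k)) * of_nat (Stirling (l + r - k) (r - k)) *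
              umbral L (r - k) ((pderiv ^^ l) p) (of_nat j))
           * degen_bernpoly r L k x)
      + (\<Sum>k=r..n. 1 / fact k *
           (\<Sum>j=0..r. \<Sum>l=k - r..n. (-1) ^ (r - j) * of_nat (r choose j) *
              fact (k - r) * (L ^ (l - (k - r)) / fact l) * of_nat (Stirling l (k - r)) *
              poly ((pderiv ^^ l) p) (of_nat j))
           * degen_bernpoly r L k x)"
      unfolding ex[of x] split[OF rn]
      apply (rule arg_cong2[where f="(+)"])
       apply (rule sum.cong[OF refl], rule A, simp)
      apply (rule sum.cong[OF refl], rule B, auto)
      done
  qed
qed

end
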